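(* Let $\Omega\subset\mathbb R^n$ be bounded and let $p_1,p_2,s_1,s_2:\Omega\times\Omega\to(0,\infty)$ be symmetric functions such that $s_1(x,y)<s_2(x,y)$ and $p_1(x,y)\le p_2(x,y)$ for all $x,y\in\Omega$, $0<(p_1)^-_\Omega\le (p_1)^+_\Omega<\infty$, and $d_1\le s_2(x,y)-s_1(x,y)\le d_2$ for all $x,y\in\Omega$, for some constants $0<d_1\le d_2$. Then for every measurable $v:\Omega\to\mathbb R$, $$\varrho_{s_1(\cdot,\cdot),p_1(\cdot,\cdot)}(v;\Omega)\le M\Big\{\varrho_{s_2(\cdot,\cdot),p_2(\cdot,\cdot)}(v;\Omega)+\frac{c(n)}{d_1(p_1)^-_\Omega}\,|\Omega\cap\{v\ne0\}|\Big\},$$ where $M=\mathrm{diam}(\Omega)^{d_1(p_1)^-_\Omega}$ if $\mathrm{diam}(\Omega)\le1$, $M=\mathrm{diam}(\Omega)^{d_2(p_1)^+_\Omega}$ if $\mathrm{diam}(\Omega)>1$, and $c(n)>0$ depends only on $n$.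
   Context: For symmetric $s,p$ on $\Omega\times\Omega$ and measurable $v$: $\varrho_{s(\cdot,\cdot),p(\cdot,\cdot)}(v;\Omega):=\int_\Omega\int_\Omega\frac{|v(x)-v(y)|^{p(x,y)}}{|x-y|^{n+s(x,y)p(x,y)}}dy\,dx$. For $f$ on $\Omega\times\Omega$, $f^-_\Omega:=\inf_{\Omega\times\Omega}f$, $f^+_\Omega:=\sup_{\Omega\times\Omega}f$. *)

theory Defs
  imports "HOL-Analysis.Analysis"
begin

definition frac_modular ::
  "('a::euclidean_space \<Rightarrow> 'a \<Rightarrow> real) \<Rightarrow> ('a \<Rightarrow> 'a \<Rightarrow> real) \<Rightarrow> ('a \<Rightarrow> real) \<Rightarrow> 'a set \<Rightarrow> ennreal"
  where "frac_modular s p v \<Omega> =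
    (\<integral>\<^sup>+ x. (\<integral>\<^sup>+ y. ennreal (\<bar>v x - v y\<bar> powr p x y
        / dist x y powr (real DIM('a) + s x y * p x y)) * indicator \<Omega> y \<partial>lebesgue)
      * indicator \<Omega> x \<partial>lebesgue)"

definition inf_on :: "('a \<Rightarrow> 'a \<Rightarrow> real) \<Rightarrow> 'a set \<Rightarrow> real"
  where "inf_on f \<Omega> = (INF z\<in>\<Omega> \<times> \<Omega>. f (fst z) (snd z))"

definition sup_on :: "('a \<Rightarrow> 'a \<Rightarrow> real) \<Rightarrow> 'a set \<Rightarrow> real"
  where "sup_on f \<Omega> = (SUP z\<in>\<Omega> \<times> \<Omega>. f (fst z) (snd z))"

end

theory Submission
  imports Defs
begin


lemma id_lebesgue_meas[measurable]: "(\<lambda>x::'a::euclidean_space. x) \<in> borel_measurable lebesgue"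
  by (rule measurable_completion) simp

lemma sigma_finite_lebesgue: "sigma_finite_measure (lebesgue :: 'a::euclidean_space measure)"
proof
  obtain A :: "'a set set" where A: "countable A" "A \<subseteq> sets lborel" "\<Union>A = space lborel"
     "\<forall>a\<in>A. emeasure lborel a \<noteq> \<infinity>"
    using lborel.sigma_finite_countable by blast
  show "\<exists>A::'a set set. countable A \<and> A \<subseteq> sets lebesgue \<and> \<Union> A = space lebesgue \<and> (\<forall>a\<in>A. emeasure lebesgue a \<noteq> \<infinity>)"
    using A by (intro exI[of _ A]) (auto simp: subset_eq)
qed

lemma pair_sigma_finite_lebesgue: "pair_sigma_finite (lebesgue :: 'a::euclidean_space measure) (lebesgue :: 'b::euclidean_space measure)"
  by (simp add: pair_sigma_finite_def sigma_finite_lebesgue)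

lemma kfun_meas[measurable]:
  "(\<lambda>r::real. ennreal (if r \<le> 1 then r powr a else r powr b)) \<in> borel_measurable borel"
  by measurable

lemma test1:
  fixes V \<Omega> :: "'a::euclidean_space set"
  assumes [measurable]: "V \<in> sets lebesgue" "\<Omega> \<in> sets lebesgue"
  shows "(\<lambda>z. ennreal (if dist (fst z) (snd z) \<le> 1 then dist (fst z) (snd z) powr a else dist (fst z) (snd z) powr b)
      * indicator V (fst z) * indicator \<Omega> (snd z)) \<in> borel_measurable (lebesgue \<Otimes>\<^sub>M lebesgue)"
  by measurable

lemma test2:
  fixes V \<Omega> :: "'a::euclidean_space set"
  assumes [measurable]: "V \<in> sets lebesgue" "\<Omega> \<in> sets lebesgue"
  shows "(\<lambda>y. ennreal (if dist x y \<le> 1 then dist x y powr a else dist x y powr b)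
      * indicator V y * indicator \<Omega> y) \<in> borel_measurable lebesgue"
  by measurable

lemma nn_integral_cmult_le:
  assumes "c < top"
  shows "(\<integral>\<^sup>+ x. c * f x \<partial>M) \<le> c * integral\<^sup>N M f"
proof (cases "c = 0")
  case True then show ?thesis by simp
next
  case False
  show ?thesis
    unfolding nn_integral_def[of M "\<lambda>x. c * f x"]
  proof (rule SUP_least, clarsimp)
    fix s assume s: "simple_function M s" "s \<le> (\<lambda>x. c * f x)"
    define s' where "s' = (\<lambda>x. s x / c)"
    have s'm: "simple_function M s'" unfolding s'_def divide_ennreal_def
      using s(1) by (intro simple_function_mult) auto
    have eq: "s x = c * s' x" for x
      unfolding s'_def using False assms by (metis ennreal_mult_divide_eq mult.commute ennreal_times_divide top.not_eq_extremum)
    have le: "s' x \<le> f x" for x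
      unfolding s'_def using s(2) False assms
      by (simp add: le_fun_def divide_le_posI_ennreal dual_order.strict_iff_order)
    have "integral\<^sup>S M s = integral\<^sup>N M s" using s(1) by (simp add: nn_integral_eq_simple_integral)
    also have "\<dots> = (\<integral>\<^sup>+ x. c * s' x \<partial>M)" by (subst eq[symmetric]) (rule refl)
    also have "\<dots> = c * integral\<^sup>N M s'"
      using s'm by (intro nn_integral_cmult) (auto intro: borel_measurable_simple_function)
    also have "\<dots> \<le> c * integral\<^sup>N M f" using le by (intro mult_left_mono nn_integral_mono) auto
    finally show "integral\<^sup>S M s \<le> c * integral\<^sup>N M f" .
  qed
qed

lemma nn_integral_add_le:
  assumes g: "g \<in> borel_measurable M"
  shows "(\<integral>\<^sup>+ x. f x + g x \<partial>M) \<le> integral\<^sup>N M f + integral\<^sup>N M g"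
  unfolding nn_integral_def_finite[of M "\<lambda>x. f x + g x"]
proof (rule SUP_least, clarsimp)
  fix s assume s: "simple_function M s" "s \<le> (\<lambda>x. f x + g x)" and fin: "\<forall>x. s x < top"
  have sm: "s \<in> borel_measurable M" using s(1) by (rule borel_measurable_simple_function)
  have "integral\<^sup>S M s = integral\<^sup>N M s" using s(1) by (simp add: nn_integral_eq_simple_integral)
  also have "\<dots> \<le> (\<integral>\<^sup>+ x. (s x - g x) + g x \<partial>M)"
    by (intro nn_integral_mono) (auto simp add: diff_add_self_ennreal)
  also have "\<dots> = (\<integral>\<^sup>+ x. (s x - g x) \<partial>M) + integral\<^sup>N M g"
    using sm g by (intro nn_integral_add) auto
  also have "(\<integral>\<^sup>+ x. (s x - g x) \<partial>M) \<le> integral\<^sup>N M f"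
    using s(2) fin by (intro nn_integral_mono) (auto simp: le_fun_def ennreal_minus_le_iff add.commute; metis less_irrefl)
  finally show "integral\<^sup>S M s \<le> integral\<^sup>N M f + integral\<^sup>N M g" by (simp add: add_right_mono order_trans)
qed



lemma emeasure_lebesgue_cball:
  fixes x :: "'a::euclidean_space"
  assumes "r \<ge> 0"
  shows "emeasure lebesgue (cball x r) = ennreal (unit_ball_vol (DIM('a)) * r ^ DIM('a))"
proof -
  have "emeasure lebesgue (cball x r) = emeasure lborel (cball x r)"
    by (simp add: main_part_sets)
  then show ?thesis using emeasure_cball[OF assms] by simp
qed

lemma ennreal_term_le_suminf: "(f::nat \<Rightarrow> ennreal) k \<le> suminf f"
  using sum_le_suminf[of f "{k}"] by simp

lemma ball_int:
  fixes x :: "'a::euclidean_space" and \<alpha> R :: real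
  assumes \<alpha>: "\<alpha> > 0" and R0: "R \<ge> 0"
  shows "(\<integral>\<^sup>+y. ennreal (dist x y powr (\<alpha> - real DIM('a))) * indicator (cball x R) y \<partial>lebesgue)
      \<le> ennreal (6 * real DIM('a) * unit_ball_vol (real DIM('a)) * R powr \<alpha> / \<alpha>)"
proof (cases "R = 0")
  case True
  have "(\<integral>\<^sup>+y. ennreal (dist x y powr (\<alpha> - real DIM('a))) * indicator (cball x R) y \<partial>lebesgue) = 0"
  proof -
    have "(\<integral>\<^sup>+y. ennreal (dist x y powr (\<alpha> - real DIM('a))) * indicator (cball x R) y \<partial>lebesgue)
       = (\<integral>\<^sup>+y. 0 \<partial>(lebesgue::'a measure))"
      using True by (intro nn_integral_cong) (auto simp: indicator_def)
    then show ?thesis by simp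
  qed
  then show ?thesis by simp
next
  case False
  with R0 have R: "R > 0" by simp
  define N where "N = DIM('a)"
  define n where "n = real N"
  have n1: "n \<ge> 1" unfolding n_def N_def by simp
  define \<omega> where "\<omega> = unit_ball_vol n"
  have \<omega>: "\<omega> \<ge> 0" unfolding \<omega>_def using n1 by simp
  define L where "L = max \<alpha> n"
  have L: "L > 0" "\<alpha> \<le> L" "n \<le> L" using \<alpha> n1 by (auto simp: L_def)
  define r where "r = exp (-1/L)"
  have r: "0 < r" "r < 1" using L by (auto simp: r_def)
  define q where "q k = R * r ^ k" for k
  have q: "q k > 0" for k using R r by (simp add: q_def)
  define A where "A k = cball x (q k) - cball x (q (Suc k))" for k
  define b where "b k = 3 * q k powr (\<alpha> - n)" for k
  have Asets: "A k \<in> sets lebesgue" for k unfolding A_def by auto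
  have step1: "ennreal (dist x y powr (\<alpha> - n)) * indicator (cball x R) y
       \<le> (\<Sum>k. ennreal (b k) * indicator (A k) y)" for y
  proof (cases "y \<in> cball x R \<and> y \<noteq> x")
    case False
    then show ?thesis by (auto simp: indicator_def)
  next
    case True
    define d where "d = dist x y"
    have d: "0 < d" "d \<le> R" using True by (auto simp: d_def)
    obtain m where m: "r ^ m < d / R" using real_arch_pow_inv[of "d/R" r] d R r by auto
    have ex: "\<exists>j. q (Suc j) < d"
    proof
      have "q (Suc m) = R * r ^ m * r" by (simp add: q_def)
      also have "\<dots> < R * r ^ m" using R r by simp
      also have "\<dots> < d" using m R by (simp add: field_simps)
      finally show "q (Suc m) < d" .
    qed
    define k where "k = (LEAST j. q (Suc j) < d)"
    have k1: "q (Suc k) < d" unfolding k_def by (rule LeastI_ex[OF ex])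
    have k2: "d \<le> q k"
    proof (cases k)
      case 0 then show ?thesis using d by (simp add: q_def)
    next
      case (Suc j)
      have "\<not> q (Suc j) < d" using not_less_Least[of j "\<lambda>j. q (Suc j) < d"] Suc k_def by simp
      then show ?thesis using Suc by simp
    qed
    have yA: "y \<in> A k" using k1 k2 unfolding A_def d_def by (auto simp: dist_commute)
    have bound: "d powr (\<alpha> - n) \<le> b k"
    proof (cases "\<alpha> - n \<ge> 0")
      case True
      have "d powr (\<alpha> - n) \<le> q k powr (\<alpha> - n)" using True d k2 by (intro powr_mono2) auto
      also have "\<dots> \<le> b k" unfolding b_def by simp
      finally show ?thesis .
    next
      case False
      have "d powr (\<alpha> - n) \<le> q (Suc k) powr (\<alpha> - n)" using False d k1 q[of "Suc k"]
        by (intro powr_mono2') auto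
      also have "q (Suc k) = q k * r" by (simp add: q_def)
      also have "(q k * r) powr (\<alpha> - n) = q k powr (\<alpha> - n) * r powr (\<alpha> - n)"
        using q r by (simp add: powr_mult)
      also have "r powr (\<alpha> - n) = exp ((n - \<alpha>) / L)"
        using r by (simp add: powr_def r_def field_simps)
      also have "exp ((n - \<alpha>) / L) \<le> exp 1"
        using L \<alpha> by (simp add: field_simps)
      also have "exp (1::real) \<le> 3" by (rule exp_le)
      finally show ?thesis
        unfolding b_def using q[of k] by (simp add: mult_left_mono)
    qed
    have "ennreal (dist x y powr (\<alpha> - n)) * indicator (cball x R) y = ennreal (d powr (\<alpha> - n))"
      using True by (simp add: d_def)
    also have "\<dots> \<le> ennreal (b k) * indicator (A k) y" using bound yA by (simp add: ennreal_leI)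
    also have "\<dots> \<le> (\<Sum>i. ennreal (b i) * indicator (A i) y)"
      by (rule ennreal_term_le_suminf)
    finally show ?thesis .
  qed
  have "(\<integral>\<^sup>+y. ennreal (dist x y powr (\<alpha> - real DIM('a))) * indicator (cball x R) y \<partial>lebesgue)
       \<le> (\<integral>\<^sup>+y. (\<Sum>k. ennreal (b k) * indicator (A k) y) \<partial>lebesgue)"
    using step1 unfolding n_def N_def by (intro nn_integral_mono) auto
  also have "\<dots> = (\<Sum>k. \<integral>\<^sup>+y. ennreal (b k) * indicator (A k) y \<partial>lebesgue)"
    using Asets by (intro nn_integral_suminf) auto
  also have "\<dots> = (\<Sum>k. ennreal (b k) * emeasure lebesgue (A k))"
    using Asets by (simp add: nn_integral_cmult_indicator)
  also have "\<dots> = (\<Sum>k. ennreal (3 * \<omega> * (1 - r ^ N) * R powr \<alpha> * (r powr \<alpha>) ^ k))"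
  proof (rule suminf_cong)
    fix k
    have sub: "cball x (q (Suc k)) \<subseteq> cball x (q k)"
      using q[of k] r R by (intro subset_cball) (simp add: q_def mult_left_le_one_le)
    have "emeasure lebesgue (A k) = emeasure lebesgue (cball x (q k)) - emeasure lebesgue (cball x (q (Suc k)))"
      unfolding A_def using sub less_imp_le[OF q[of "Suc k"]] by (intro emeasure_Diff) (auto simp: emeasure_cball)
    also have "\<dots> = ennreal (\<omega> * q k ^ N - \<omega> * q (Suc k) ^ N)"
      using q[of k] q[of "Suc k"] \<omega> unfolding \<omega>_def n_def N_def
      by (simp add: emeasure_cball less_imp_le ennreal_minus)
    also have "\<omega> * q k ^ N - \<omega> * q (Suc k) ^ N = \<omega> * q k ^ N * (1 - r ^ N)"
      by (simp add: q_def power_mult_distrib field_simps)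
    finally have em: "emeasure lebesgue (A k) = ennreal (\<omega> * q k ^ N * (1 - r ^ N))" .
    have rN: "r ^ N \<le> 1" using r by (simp add: power_le_one)
    have "b k * (\<omega> * q k ^ N * (1 - r ^ N)) = 3 * \<omega> * (1 - r ^ N) * (q k powr (\<alpha> - n) * q k powr n)"
      using q[of k] unfolding b_def n_def by (simp add: powr_realpow)
    also have "q k powr (\<alpha> - n) * q k powr n = q k powr \<alpha>"
      using q[of k] by (simp add: powr_add[symmetric])
    also have "q k powr \<alpha> = R powr \<alpha> * (r powr \<alpha>) ^ k"
      using R r unfolding q_def by (simp add: powr_mult powr_power powr_realpow[symmetric] powr_powr mult.commute)
    finally have eq: "b k * (\<omega> * q k ^ N * (1 - r ^ N)) = 3 * \<omega> * (1 - r ^ N) * R powr \<alpha> * (r powr \<alpha>) ^ k"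
      by simp
    show "ennreal (b k) * emeasure lebesgue (A k) = ennreal (3 * \<omega> * (1 - r ^ N) * R powr \<alpha> * (r powr \<alpha>) ^ k)"
      unfolding em eq[symmetric] using \<omega> rN q[of k]
      by (simp add: ennreal_mult b_def)
  qed
  also have "\<dots> = ennreal (3 * \<omega> * (1 - r ^ N) * R powr \<alpha> * (1 / (1 - r powr \<alpha>)))"
  proof (rule suminf_ennreal_eq)
    show "0 \<le> 3 * \<omega> * (1 - r ^ N) * R powr \<alpha> * (r powr \<alpha>) ^ k" for k
      using \<omega> r by (simp add: power_le_one)
    have "r powr \<alpha> < 1" using r \<alpha> by (simp add: powr01_less_one)
    then show "(\<lambda>k. 3 * \<omega> * (1 - r ^ N) * R powr \<alpha> * (r powr \<alpha>) ^ k) sums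
        (3 * \<omega> * (1 - r ^ N) * R powr \<alpha> * (1 / (1 - r powr \<alpha>)))"
      using r by (intro sums_mult geometric_sums) simp
  qed
  also have "\<dots> \<le> ennreal (6 * real DIM('a) * unit_ball_vol (real DIM('a)) * R powr \<alpha> / \<alpha>)"
  proof (rule ennreal_leI)
    have rN: "r ^ N = exp (- n / L)" unfolding r_def n_def by (simp add: exp_of_nat_mult[symmetric])
    have ra: "r powr \<alpha> = exp (- (\<alpha> / L))" unfolding r_def by (simp add: powr_def)
    have h1: "1 - r ^ N \<le> n / L" unfolding rN using exp_ge_add_one_self[of "- n / L"] by simp
    have h1': "0 \<le> 1 - r ^ N" using r by (simp add: power_le_one)
    define t where "t = \<alpha> / L"
    have t: "0 < t" "t \<le> 1" using L \<alpha> by (auto simp: t_def)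
    have "exp t \<ge> 1 + t" by (rule exp_ge_add_one_self)
    then have "exp (- t) \<le> 1 / (1 + t)" using t by (simp add: exp_minus field_simps)
    then have e1: "exp (- t) * (1 + t) \<le> 1" using t by (simp add: field_simps)
    have e2: "2 \<le> (2 - t) * (1 + t)" using t by (simp add: algebra_simps mult_left_le_one_le power2_eq_square)
    have "2 * exp (- t) * (1 + t) \<le> (2 - t) * (1 + t)" using e1 e2 by linarith
    then have "2 * exp (- t) \<le> 2 - t" using t by (simp add: mult_le_cancel_right)
    then have h2: "1 - r powr \<alpha> \<ge> t / 2" unfolding ra t_def[symmetric] by simp
    have tpos: "t / 2 > 0" using t by simp
    have "3 * \<omega> * (1 - r ^ N) * R powr \<alpha> * (1 / (1 - r powr \<alpha>))
        \<le> 3 * \<omega> * (n / L) * R powr \<alpha> * (1 / (t / 2))"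
      using h1 h1' h2 tpos \<omega> L n1
      by (intro mult_mono divide_left_mono) (auto intro!: mult_nonneg_nonneg divide_nonneg_pos)
    also have "\<dots> = 6 * n * \<omega> * R powr \<alpha> / \<alpha>"
      using L \<alpha> unfolding t_def by (simp add: field_simps)
    finally show "3 * \<omega> * (1 - r ^ N) * R powr \<alpha> * (1 / (1 - r powr \<alpha>))
        \<le> 6 * real DIM('a) * unit_ball_vol (real DIM('a)) * R powr \<alpha> / \<alpha>"
      unfolding \<omega>_def n_def N_def .
  qed
  finally show ?thesis .
qed



lemma pw_bound:
  fixes a d D n p1 p2 s1 s2 d1 d2 Pm PM :: real
  assumes d: "0 < d" "d \<le> D" and p: "0 < p1" "p1 \<le> p2" and ds: "d1 \<le> s2 - s1" "s2 - s1 \<le> d2"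
    and d1: "0 < d1" and P: "0 < Pm" "Pm \<le> p1" "p1 \<le> PM"
  shows "\<bar>a\<bar> powr p1 / d powr (n + s1 * p1)
     \<le> (if D \<le> 1 then D powr (d1 * Pm) else D powr (d2 * PM)) * (\<bar>a\<bar> powr p2 / d powr (n + s2 * p2))
       + (if a = 0 then 0 else (if d \<le> 1 then d powr (d1 * Pm - n) else d powr (d2 * PM - n)))"
proof -
  define M where "M = (if D \<le> 1 then D powr (d1 * Pm) else D powr (d2 * PM))"
  define \<alpha> where "\<alpha> = d1 * Pm"
  define \<beta> where "\<beta> = d2 * PM"
  define e where "e = (s2 - s1) * p1"
  have M0: "M \<ge> 0" unfolding M_def by simp
  have \<alpha>: "0 < \<alpha>" unfolding \<alpha>_def using d1 P by simp
  have e\<alpha>: "\<alpha> \<le> e" unfolding \<alpha>_def e_def using ds d1 P by (intro mult_mono) auto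
  have e\<beta>: "e \<le> \<beta>" unfolding \<beta>_def e_def using ds d1 P by (intro mult_mono) auto
  have dM: "d powr e \<le> M"
  proof (cases "D \<le> 1")
    case True
    have "d powr e \<le> d powr \<alpha>" using d True e\<alpha> by (intro powr_mono') auto
    also have "\<dots> \<le> D powr \<alpha>" using d \<alpha> by (intro powr_mono2) auto
    finally show ?thesis using True unfolding M_def \<alpha>_def by simp
  next
    case False
    have \<beta>0: "\<beta> \<ge> 0" using e\<beta> e\<alpha> \<alpha> by simp
    show ?thesis
    proof (cases "d \<le> 1")
      case True
      have "d powr e \<le> 1" using d True e\<alpha> \<alpha> by (intro powr_le1) auto
      also have "1 \<le> D powr \<beta>" using False \<beta>0 by (intro ge_one_powr_ge_zero) auto
      finally show ?thesis using False unfolding M_def \<beta>_def by simp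
    next
      case False2: False
      have "d powr e \<le> d powr \<beta>" using False2 e\<beta> by (intro powr_mono) auto
      also have "\<dots> \<le> D powr \<beta>" using d \<beta>0 by (intro powr_mono2) auto
      finally show ?thesis using False unfolding M_def \<beta>_def by simp
    qed
  qed
  show ?thesis
  proof (cases "a = 0")
    case True
    then show ?thesis using M0 p by (simp add: M_def[symmetric])
  next
    case False
    define A where "A = \<bar>a\<bar>"
    have A: "A > 0" using False by (simp add: A_def)
    define t where "t = A / d powr s2"
    have t: "t > 0" using A d by (simp add: t_def)
    have At: "A = t * d powr s2" using d by (simp add: t_def)
    have F1: "\<bar>a\<bar> powr p1 / d powr (n + s1 * p1) = t powr p1 * d powr e / d powr n"
    proof -
      have "\<bar>a\<bar> powr p1 = t powr p1 * (d powr e * d powr (s1 * p1))"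
        unfolding A_def[symmetric] At using t d
        by (simp add: powr_mult powr_powr e_def powr_add[symmetric] algebra_simps)
      moreover have "d powr (n + s1 * p1) = d powr n * d powr (s1 * p1)" by (simp add: powr_add)
      ultimately show ?thesis using d by (simp add: field_simps)
    qed
    have F2: "\<bar>a\<bar> powr p2 / d powr (n + s2 * p2) = t powr p2 / d powr n"
    proof -
      have "\<bar>a\<bar> powr p2 = t powr p2 * d powr (s2 * p2)"
        unfolding A_def[symmetric] At using t d
        by (simp add: powr_mult powr_powr)
      moreover have "d powr (n + s2 * p2) = d powr n * d powr (s2 * p2)" by (simp add: powr_add)
      ultimately show ?thesis using d by (simp add: field_simps)
    qed
    have kpos: "0 \<le> (if d \<le> 1 then d powr (d1 * Pm - n) else d powr (d2 * PM - n))" by simp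
    show ?thesis
    proof (cases "t \<ge> 1")
      case True
      have "t powr p1 \<le> t powr p2" using True p by (intro powr_mono) auto
      then have "t powr p1 * d powr e \<le> t powr p2 * M" using dM by (intro mult_mono) auto
      then have "t powr p1 * d powr e / d powr n \<le> M * (t powr p2 / d powr n)"
        using d by (simp add: divide_right_mono mult.commute)
      then show ?thesis unfolding F1 F2 M_def using kpos False by simp
    next
      case False2: False
      have "t powr p1 \<le> 1" using t False2 p by (intro powr_le1) auto
      then have "t powr p1 * d powr e / d powr n \<le> d powr e / d powr n"
        using d by (intro divide_right_mono) (auto intro: mult_left_le_one_le)
      also have "\<dots> = d powr (e - n)" using d by (simp add: powr_diff)
      also have "\<dots> \<le> (if d \<le> 1 then d powr (d1 * Pm - n) else d powr (d2 * PM - n))"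
        using d e\<alpha> e\<beta> unfolding \<alpha>_def \<beta>_def by (auto intro: powr_mono' powr_mono)
      finally show ?thesis unfolding F1 F2 M_def using False
        by (smt (verit) M0 M_def divide_nonneg_nonneg mult_nonneg_nonneg powr_ge_zero)
    qed
  qed
qed


lemma main_bound:
  fixes \<Omega> :: "'a::euclidean_space set" and p1 p2 s1 s2 :: "'a \<Rightarrow> 'a \<Rightarrow> real"
    and d1 d2 :: real and v :: "'a \<Rightarrow> real"
  defines "C \<equiv> 6 * real DIM('a) * unit_ball_vol (real DIM('a))"
  assumes \<Omega>m: "\<Omega> \<in> sets lebesgue" and bdd: "bounded \<Omega>"
    and p1pos: "\<forall>x\<in>\<Omega>. \<forall>y\<in>\<Omega>. 0 < p1 x y"
    and sp: "\<forall>x\<in>\<Omega>. \<forall>y\<in>\<Omega>. p1 x y \<le> p2 x y"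
    and Pm0: "0 < inf_on p1 \<Omega>" and bddp: "bdd_above ((\<lambda>z. p1 (fst z) (snd z)) ` (\<Omega> \<times> \<Omega>))"
    and d1: "0 < d1" "d1 \<le> d2"
    and ds: "\<forall>x\<in>\<Omega>. \<forall>y\<in>\<Omega>. d1 \<le> s2 x y - s1 x y \<and> s2 x y - s1 x y \<le> d2"
    and vm: "v \<in> borel_measurable (restrict_space lebesgue \<Omega>)"
  shows "frac_modular s1 p1 v \<Omega>
          \<le> ennreal (if diameter \<Omega> \<le> 1 then diameter \<Omega> powr (d1 * inf_on p1 \<Omega>)
                     else diameter \<Omega> powr (d2 * sup_on p1 \<Omega>))
            * (frac_modular s2 p2 v \<Omega>
               + ennreal (4 * C / (d1 * inf_on p1 \<Omega>)) * emeasure lebesgue (\<Omega> \<inter> {x. v x \<noteq> 0}))"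
proof (cases "\<Omega> = {}")
  case True
  then show ?thesis by (simp add: frac_modular_def)
next
  case False
  then obtain x0 where x0: "x0 \<in> \<Omega>" by auto
  define n where "n = real DIM('a)"
  define Pm where "Pm = inf_on p1 \<Omega>"
  define PM where "PM = sup_on p1 \<Omega>"
  define \<alpha> where "\<alpha> = d1 * Pm"
  define \<beta> where "\<beta> = d2 * PM"
  define D where "D = diameter \<Omega>"
  define M where "M = (if D \<le> 1 then D powr \<alpha> else D powr \<beta>)"
  define k where "k r = (if r \<le> 1 then r powr (\<alpha> - n) else r powr (\<beta> - n))" for r :: real
  define V where "V = \<Omega> \<inter> {x. v x \<noteq> 0}"
  have C0: "C \<ge> 0" unfolding C_def by simp
  have Pm_le: "Pm \<le> p1 x y" if "x \<in> \<Omega>" "y \<in> \<Omega>" for x y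
  proof -
    have "bdd_below ((\<lambda>z. p1 (fst z) (snd z)) ` (\<Omega> \<times> \<Omega>))"
      using p1pos by (intro bdd_belowI[of _ 0]) (auto simp: less_imp_le)
    then show ?thesis unfolding Pm_def inf_on_def using that
      by (metis (no_types, lifting) cINF_lower fst_conv mem_Sigma_iff snd_conv)
  qed
  have PM_ge: "p1 x y \<le> PM" if "x \<in> \<Omega>" "y \<in> \<Omega>" for x y
    unfolding PM_def sup_on_def using that bddp
    by (metis (no_types, lifting) cSUP_upper fst_conv mem_Sigma_iff snd_conv)
  have Pm: "0 < Pm" using Pm0 by (simp add: Pm_def)
  have \<alpha>: "0 < \<alpha>" unfolding \<alpha>_def using d1 Pm by simp
  have \<alpha>\<beta>: "\<alpha> \<le> \<beta>" unfolding \<alpha>_def \<beta>_def using d1 Pm Pm_le[OF x0 x0] PM_ge[OF x0 x0]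
    by (intro mult_mono) auto
  have M0: "M \<ge> 0" unfolding M_def by simp
  have D0: "D \<ge> 0" unfolding D_def by (simp add: diameter_ge_0 bdd)
  have distD: "dist x y \<le> D" if "x \<in> \<Omega>" "y \<in> \<Omega>" for x y
    unfolding D_def using bdd that by (rule diameter_bounded_bound)
  have [measurable]: "\<Omega> \<in> sets lebesgue" by (rule \<Omega>m)
  have Vm[measurable]: "V \<in> sets lebesgue"
  proof -
    have "{x \<in> space (restrict_space lebesgue \<Omega>). v x \<noteq> 0} \<in> sets (restrict_space lebesgue \<Omega>)"
      using vm by measurable
    then show ?thesis unfolding V_def using \<Omega>m
      by (subst (asm) sets_restrict_space_iff) (auto simp: space_restrict_space Int_def)
  qed
  have cb[measurable]: "cball x r \<in> sets lebesgue" for x :: 'a and r by simp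
  have VO: "V \<subseteq> \<Omega>" unfolding V_def by auto
  have K: "(\<integral>\<^sup>+y. ennreal (k (dist x y)) * indicator \<Omega> y \<partial>lebesgue) \<le> ennreal (2 * C * M / \<alpha>)"
    if x: "x \<in> \<Omega>" for x
  proof -
    have "(\<integral>\<^sup>+y. ennreal (k (dist x y)) * indicator \<Omega> y \<partial>lebesgue)
        \<le> (\<integral>\<^sup>+y. ennreal (k (dist x y)) * indicator (cball x D) y \<partial>lebesgue)"
      using distD[OF x] by (intro nn_integral_mono) (auto simp: indicator_def)
    also have "\<dots> \<le> ennreal (2 * C * M / \<alpha>)"
    proof (cases "D \<le> 1")
      case True
      have "(\<integral>\<^sup>+y. ennreal (k (dist x y)) * indicator (cball x D) y \<partial>lebesgue)
          = (\<integral>\<^sup>+y. ennreal (dist x y powr (\<alpha> - real DIM('a))) * indicator (cball x D) y \<partial>lebesgue)"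
        using True by (intro nn_integral_cong) (auto simp: indicator_def k_def n_def)
      also have "\<dots> \<le> ennreal (C * D powr \<alpha> / \<alpha>)"
        unfolding C_def using ball_int[OF \<alpha> D0, of x] by simp
      also have "\<dots> \<le> ennreal (2 * C * M / \<alpha>)"
        using True C0 \<alpha> by (intro ennreal_leI) (simp add: M_def divide_right_mono)
      finally show ?thesis .
    next
      case False
      have "(\<integral>\<^sup>+y. ennreal (k (dist x y)) * indicator (cball x D) y \<partial>lebesgue)
          \<le> (\<integral>\<^sup>+y. ennreal (dist x y powr (\<alpha> - real DIM('a))) * indicator (cball x 1) y
               + ennreal (dist x y powr (\<beta> - real DIM('a))) * indicator (cball x D) y \<partial>lebesgue)"
        by (intro nn_integral_mono) (auto simp: indicator_def k_def n_def)
      also have "\<dots> = (\<integral>\<^sup>+y. ennreal (dist x y powr (\<alpha> - real DIM('a))) * indicator (cball x 1) y \<partial>lebesgue)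
               + (\<integral>\<^sup>+y. ennreal (dist x y powr (\<beta> - real DIM('a))) * indicator (cball x D) y \<partial>lebesgue)"
        by (intro nn_integral_add) measurable
      also have "\<dots> \<le> ennreal (C * 1 powr \<alpha> / \<alpha>) + ennreal (C * D powr \<beta> / \<beta>)"
        unfolding C_def using \<alpha> \<alpha>\<beta> D0
        by (intro add_mono ball_int) auto
      also have "\<dots> = ennreal (C / \<alpha> + C * M / \<beta>)"
        using C0 \<alpha> \<alpha>\<beta> False by (simp add: M_def ennreal_plus[symmetric] del: ennreal_plus)
      also have "\<dots> \<le> ennreal (2 * C * M / \<alpha>)"
      proof (intro ennreal_leI)
        have M1: "1 \<le> M" unfolding M_def using False \<alpha> \<alpha>\<beta>
          by (simp add: ge_one_powr_ge_zero)
        have "C / \<alpha> \<le> C * M / \<alpha>" using M1 C0 \<alpha> by (simp add: divide_right_mono mult_le_cancel_left1)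
        moreover have "C * M / \<beta> \<le> C * M / \<alpha>" using M1 C0 \<alpha> \<alpha>\<beta>
          by (intro divide_left_mono) auto
        ultimately show "C / \<alpha> + C * M / \<beta> \<le> 2 * C * M / \<alpha>" by simp
      qed
      finally show ?thesis .
    qed
    finally show ?thesis .
  qed
  define H1 where "H1 x y = ennreal (k (dist x y)) * indicator V x * indicator \<Omega> y" for x y
  define H where "H x y = H1 x y + H1 y x" for x y
  have kmeas[measurable]: "(\<lambda>r. ennreal (k r)) \<in> borel_measurable borel"
    unfolding k_def by measurable
  have H1m: "(\<lambda>z. H1 (fst z) (snd z)) \<in> borel_measurable (lebesgue \<Otimes>\<^sub>M lebesgue)"
    unfolding H1_def by measurable
  have H1m': "case_prod H1 \<in> borel_measurable (lebesgue \<Otimes>\<^sub>M lebesgue)"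
    using H1m by (simp add: case_prod_beta')
  have H1sm: "(\<lambda>z. H1 (snd z) (fst z)) \<in> borel_measurable (lebesgue \<Otimes>\<^sub>M lebesgue)"
    unfolding H1_def by measurable
  have Hm: "(\<lambda>z. H (fst z) (snd z)) \<in> borel_measurable (lebesgue \<Otimes>\<^sub>M lebesgue)"
    unfolding H_def H1_def by measurable
  have Hym: "(\<lambda>y. H x y) \<in> borel_measurable lebesgue" for x
    unfolding H_def H1_def by measurable
  interpret sfl: sigma_finite_measure "lebesgue :: 'a measure" by (rule sigma_finite_lebesgue)
  interpret psf: pair_sigma_finite "lebesgue :: 'a measure" "lebesgue :: 'a measure"
    by (rule pair_sigma_finite_lebesgue)
  have pw: "ennreal (\<bar>v x - v y\<bar> powr p1 x y / dist x y powr (real DIM('a) + s1 x y * p1 x y)) * indicator \<Omega> y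
     \<le> ennreal M * (ennreal (\<bar>v x - v y\<bar> powr p2 x y / dist x y powr (real DIM('a) + s2 x y * p2 x y)) * indicator \<Omega> y)
        + H x y" if x: "x \<in> \<Omega>" for x y
  proof (cases "y \<in> \<Omega> \<and> y \<noteq> x")
    case False
    then show ?thesis by (auto simp: indicator_def)
  next
    case True
    define a where "a = v x - v y"
    define dd where "dd = dist x y"
    have dd: "0 < dd" "dd \<le> D" using True distD[OF x] by (auto simp: dd_def)
    have b: "\<bar>a\<bar> powr p1 x y / dd powr (n + s1 x y * p1 x y)
       \<le> M * (\<bar>a\<bar> powr p2 x y / dd powr (n + s2 x y * p2 x y))
       + (if a = 0 then 0 else k dd)"
      using pw_bound[OF dd, where ?p1.0="p1 x y" and ?p2.0="p2 x y" and ?d1.0=d1 and ?s2.0="s2 x y" and ?s1.0="s1 x y" and ?d2.0=d2 and Pm=Pm and PM=PM and n=n and a=a]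
        p1pos sp ds d1 Pm Pm_le PM_ge x True
      unfolding M_def k_def \<alpha>_def \<beta>_def by auto
    have Hge: "ennreal (if a = 0 then 0 else k dd) \<le> H x y"
    proof (cases "a = 0")
      case False
      then have "v x \<noteq> 0 \<or> v y \<noteq> 0" unfolding a_def by auto
      then show ?thesis using x True unfolding H_def H1_def V_def dd_def
        by (auto simp: indicator_def dist_commute)
    qed simp
    have nn1: "0 \<le> \<bar>a\<bar> powr p2 x y / dd powr (n + s2 x y * p2 x y)" by simp
    have nn2: "0 \<le> (if a = 0 then 0 else k dd)" by (simp add: k_def)
    have "ennreal (\<bar>a\<bar> powr p1 x y / dd powr (n + s1 x y * p1 x y))
        \<le> ennreal (M * (\<bar>a\<bar> powr p2 x y / dd powr (n + s2 x y * p2 x y)) + (if a = 0 then 0 else k dd))"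
      using b by (rule ennreal_leI)
    also have "\<dots> = ennreal M * ennreal (\<bar>a\<bar> powr p2 x y / dd powr (n + s2 x y * p2 x y))
        + ennreal (if a = 0 then 0 else k dd)"
      using M0 nn1 nn2 by (simp add: ennreal_plus[symmetric] ennreal_mult[symmetric] del: ennreal_plus)
    also have "\<dots> \<le> ennreal M * ennreal (\<bar>a\<bar> powr p2 x y / dd powr (n + s2 x y * p2 x y)) + H x y"
      using Hge by (rule add_left_mono)
    finally show ?thesis using True unfolding a_def dd_def n_def by simp
  qed
  have inner: "(\<integral>\<^sup>+y. ennreal (\<bar>v x - v y\<bar> powr p1 x y / dist x y powr (real DIM('a) + s1 x y * p1 x y)) * indicator \<Omega> y \<partial>lebesgue)
     \<le> ennreal M * (\<integral>\<^sup>+y. ennreal (\<bar>v x - v y\<bar> powr p2 x y / dist x y powr (real DIM('a) + s2 x y * p2 x y)) * indicator \<Omega> y \<partial>lebesgue)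
        + (\<integral>\<^sup>+y. H x y \<partial>lebesgue)" if x: "x \<in> \<Omega>" for x
  proof -
    have "(\<integral>\<^sup>+y. ennreal (\<bar>v x - v y\<bar> powr p1 x y / dist x y powr (real DIM('a) + s1 x y * p1 x y)) * indicator \<Omega> y \<partial>lebesgue)
      \<le> (\<integral>\<^sup>+y. ennreal M * (ennreal (\<bar>v x - v y\<bar> powr p2 x y / dist x y powr (real DIM('a) + s2 x y * p2 x y)) * indicator \<Omega> y)
        + H x y \<partial>lebesgue)"
      using pw[OF x] by (intro nn_integral_mono) auto
    also have "\<dots> \<le> (\<integral>\<^sup>+y. ennreal M * (ennreal (\<bar>v x - v y\<bar> powr p2 x y / dist x y powr (real DIM('a) + s2 x y * p2 x y)) * indicator \<Omega> y) \<partial>lebesgue)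
        + (\<integral>\<^sup>+y. H x y \<partial>lebesgue)"
      by (rule nn_integral_add_le[OF Hym])
    also have "\<dots> \<le> ennreal M * (\<integral>\<^sup>+y. ennreal (\<bar>v x - v y\<bar> powr p2 x y / dist x y powr (real DIM('a) + s2 x y * p2 x y)) * indicator \<Omega> y \<partial>lebesgue)
        + (\<integral>\<^sup>+y. H x y \<partial>lebesgue)"
      by (intro add_right_mono nn_integral_cmult_le) simp
    finally show ?thesis .
  qed
  define \<Gamma> where "\<Gamma> x = (\<integral>\<^sup>+y. H x y \<partial>lebesgue)" for x
  have \<Gamma>m: "\<Gamma> \<in> borel_measurable lebesgue"
    using sfl.borel_measurable_nn_integral_fst[OF Hm] unfolding \<Gamma>_def by simp
  have outer: "frac_modular s1 p1 v \<Omega> \<le> ennreal M * frac_modular s2 p2 v \<Omega> + integral\<^sup>N lebesgue \<Gamma>"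
  proof -
    have "frac_modular s1 p1 v \<Omega> \<le> (\<integral>\<^sup>+x. ennreal M *
        ((\<integral>\<^sup>+y. ennreal (\<bar>v x - v y\<bar> powr p2 x y / dist x y powr (real DIM('a) + s2 x y * p2 x y)) * indicator \<Omega> y \<partial>lebesgue) * indicator \<Omega> x)
        + \<Gamma> x \<partial>lebesgue)"
      unfolding frac_modular_def
    proof (intro nn_integral_mono)
      fix x :: 'a
      show "(\<integral>\<^sup>+y. ennreal (\<bar>v x - v y\<bar> powr p1 x y / dist x y powr (real DIM('a) + s1 x y * p1 x y)) * indicator \<Omega> y \<partial>lebesgue) * indicator \<Omega> x
        \<le> ennreal M * ((\<integral>\<^sup>+y. ennreal (\<bar>v x - v y\<bar> powr p2 x y / dist x y powr (real DIM('a) + s2 x y * p2 x y)) * indicator \<Omega> y \<partial>lebesgue) * indicator \<Omega> x)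
          + \<Gamma> x"
        using inner[of x] unfolding \<Gamma>_def by (cases "x \<in> \<Omega>") auto
    qed
    also have "\<dots> \<le> (\<integral>\<^sup>+x. ennreal M *
        ((\<integral>\<^sup>+y. ennreal (\<bar>v x - v y\<bar> powr p2 x y / dist x y powr (real DIM('a) + s2 x y * p2 x y)) * indicator \<Omega> y \<partial>lebesgue) * indicator \<Omega> x) \<partial>lebesgue)
        + integral\<^sup>N lebesgue \<Gamma>"
      by (rule nn_integral_add_le[OF \<Gamma>m])
    also have "\<dots> \<le> ennreal M * frac_modular s2 p2 v \<Omega> + integral\<^sup>N lebesgue \<Gamma>"
      unfolding frac_modular_def by (intro add_right_mono nn_integral_cmult_le) simp
    finally show ?thesis .
  qed
  have I1: "(\<integral>\<^sup>+x. (\<integral>\<^sup>+y. H1 x y \<partial>lebesgue) \<partial>lebesgue) \<le> ennreal (2 * C * M / \<alpha>) * emeasure lebesgue V"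
  proof -
    have "(\<integral>\<^sup>+x. (\<integral>\<^sup>+y. H1 x y \<partial>lebesgue) \<partial>lebesgue) \<le> (\<integral>\<^sup>+x. ennreal (2 * C * M / \<alpha>) * indicator V x \<partial>lebesgue)"
    proof (intro nn_integral_mono)
      fix x :: 'a
      show "(\<integral>\<^sup>+y. H1 x y \<partial>lebesgue) \<le> ennreal (2 * C * M / \<alpha>) * indicator V x"
      proof (cases "x \<in> V")
        case True
        have "(\<integral>\<^sup>+y. H1 x y \<partial>lebesgue) = (\<integral>\<^sup>+y. ennreal (k (dist x y)) * indicator \<Omega> y \<partial>lebesgue)"
          using True unfolding H1_def by simp
        also have "\<dots> \<le> ennreal (2 * C * M / \<alpha>)" using K True VO by auto
        finally show ?thesis using True by simp
      next
        case False
        then show ?thesis unfolding H1_def by simp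
      qed
    qed
    also have "\<dots> = ennreal (2 * C * M / \<alpha>) * emeasure lebesgue V"
      by (rule nn_integral_cmult_indicator[OF Vm])
    finally show ?thesis .
  qed
  have I2: "integral\<^sup>N lebesgue \<Gamma> \<le> ennreal (4 * C * M / \<alpha>) * emeasure lebesgue V"
  proof -
    have "integral\<^sup>N lebesgue \<Gamma> = (\<integral>\<^sup>+x. (\<integral>\<^sup>+y. H1 x y \<partial>lebesgue) + (\<integral>\<^sup>+y. H1 y x \<partial>lebesgue) \<partial>lebesgue)"
      unfolding \<Gamma>_def H_def
      by (intro nn_integral_cong nn_integral_add) (simp_all add: H1_def)
    also have "\<dots> = (\<integral>\<^sup>+x. (\<integral>\<^sup>+y. H1 x y \<partial>lebesgue) \<partial>lebesgue) + (\<integral>\<^sup>+x. (\<integral>\<^sup>+y. H1 y x \<partial>lebesgue) \<partial>lebesgue)"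
      using sfl.borel_measurable_nn_integral_fst[OF H1m] sfl.borel_measurable_nn_integral_fst[OF H1sm]
      by (intro nn_integral_add) simp_all
    also have "(\<integral>\<^sup>+x. (\<integral>\<^sup>+y. H1 y x \<partial>lebesgue) \<partial>lebesgue) = (\<integral>\<^sup>+x. (\<integral>\<^sup>+y. H1 x y \<partial>lebesgue) \<partial>lebesgue)"
      by (rule psf.Fubini'[OF H1m'])
    also have "(\<integral>\<^sup>+x. (\<integral>\<^sup>+y. H1 x y \<partial>lebesgue) \<partial>lebesgue) + (\<integral>\<^sup>+x. (\<integral>\<^sup>+y. H1 x y \<partial>lebesgue) \<partial>lebesgue)
        \<le> ennreal (2 * C * M / \<alpha>) * emeasure lebesgue V + ennreal (2 * C * M / \<alpha>) * emeasure lebesgue V"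
      by (rule add_mono[OF I1 I1])
    also have "\<dots> = ennreal (4 * C * M / \<alpha>) * emeasure lebesgue V"
      using C0 M0 \<alpha> by (simp add: distrib_right[symmetric] ennreal_plus[symmetric] mult.assoc del: ennreal_plus)
    finally show ?thesis .
  qed
  have "frac_modular s1 p1 v \<Omega> \<le> ennreal M * frac_modular s2 p2 v \<Omega> + ennreal (4 * C * M / \<alpha>) * emeasure lebesgue V"
    using outer I2 by (meson add_left_mono order_trans)
  also have "\<dots> = ennreal M * (frac_modular s2 p2 v \<Omega> + ennreal (4 * C / \<alpha>) * emeasure lebesgue V)"
  proof -
    have eqM: "ennreal (4 * C * M / \<alpha>) = ennreal M * ennreal (4 * C / \<alpha>)"
      using C0 M0 \<alpha> by (subst ennreal_mult[symmetric]) (auto simp: field_simps)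
    show ?thesis unfolding eqM distrib_left by (simp only: mult.assoc)
  qed
  finally show ?thesis
    unfolding M_def D_def \<alpha>_def \<beta>_def Pm_def PM_def V_def .
qed

theorem lemma2p1:
  "\<exists>c::real. c > 0 \<and>
    (\<forall>(\<Omega>::'a::euclidean_space set) p1 p2 s1 s2 (d1::real) d2 (v::'a \<Rightarrow> real).
      \<Omega> \<in> sets lebesgue \<and> bounded \<Omega>
      \<and> (\<forall>f\<in>{p1, p2, s1, s2}.
            (\<lambda>z. f (fst z) (snd z)) \<in> borel_measurable (restrict_space (lebesgue \<Otimes>\<^sub>M lebesgue) (\<Omega> \<times> \<Omega>))
          \<and> (\<forall>x\<in>\<Omega>. \<forall>y\<in>\<Omega>. f x y > 0 \<and> f x y = f y x))
      \<and> (\<forall>x\<in>\<Omega>. \<forall>y\<in>\<Omega>. s1 x y < s2 x y \<and> p1 x y \<le> p2 x y)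
      \<and> 0 < inf_on p1 \<Omega> \<and> bdd_above ((\<lambda>z. p1 (fst z) (snd z)) ` (\<Omega> \<times> \<Omega>))
      \<and> 0 < d1 \<and> d1 \<le> d2
      \<and> (\<forall>x\<in>\<Omega>. \<forall>y\<in>\<Omega>. d1 \<le> s2 x y - s1 x y \<and> s2 x y - s1 x y \<le> d2)
      \<and> v \<in> borel_measurable (restrict_space lebesgue \<Omega>)
      \<longrightarrow> frac_modular s1 p1 v \<Omega>
          \<le> ennreal (if diameter \<Omega> \<le> 1 then diameter \<Omega> powr (d1 * inf_on p1 \<Omega>)
                     else diameter \<Omega> powr (d2 * sup_on p1 \<Omega>))
            * (frac_modular s2 p2 v \<Omega>
               + ennreal (c / (d1 * inf_on p1 \<Omega>)) * emeasure lebesgue (\<Omega> \<inter> {x. v x \<noteq> 0})))"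
proof (intro exI[of _ "4 * (6 * real DIM('a) * unit_ball_vol (real DIM('a)))"] conjI allI impI)
  show "0 < 4 * (6 * real DIM('a) * unit_ball_vol (real DIM('a)))" by simp
next
  fix \<Omega> :: "'a set" and p1 p2 s1 s2 :: "'a \<Rightarrow> 'a \<Rightarrow> real" and d1 d2 :: real and v :: "'a \<Rightarrow> real"
  assume A: "\<Omega> \<in> sets lebesgue \<and> bounded \<Omega>
      \<and> (\<forall>f\<in>{p1, p2, s1, s2}.
            (\<lambda>z. f (fst z) (snd z)) \<in> borel_measurable (restrict_space (lebesgue \<Otimes>\<^sub>M lebesgue) (\<Omega> \<times> \<Omega>))
          \<and> (\<forall>x\<in>\<Omega>. \<forall>y\<in>\<Omega>. f x y > 0 \<and> f x y = f y x))
      \<and> (\<forall>x\<in>\<Omega>. \<forall>y\<in>\<Omega>. s1 x y < s2 x y \<and> p1 x y \<le> p2 x y)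
      \<and> 0 < inf_on p1 \<Omega> \<and> bdd_above ((\<lambda>z. p1 (fst z) (snd z)) ` (\<Omega> \<times> \<Omega>))
      \<and> 0 < d1 \<and> d1 \<le> d2
      \<and> (\<forall>x\<in>\<Omega>. \<forall>y\<in>\<Omega>. d1 \<le> s2 x y - s1 x y \<and> s2 x y - s1 x y \<le> d2)
      \<and> v \<in> borel_measurable (restrict_space lebesgue \<Omega>)"
  have p1pos: "\<forall>x\<in>\<Omega>. \<forall>y\<in>\<Omega>. 0 < p1 x y" using A by blast
  have sp: "\<forall>x\<in>\<Omega>. \<forall>y\<in>\<Omega>. p1 x y \<le> p2 x y" using A by blast
  show "frac_modular s1 p1 v \<Omega>
          \<le> ennreal (if diameter \<Omega> \<le> 1 then diameter \<Omega> powr (d1 * inf_on p1 \<Omega>)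
                     else diameter \<Omega> powr (d2 * sup_on p1 \<Omega>))
            * (frac_modular s2 p2 v \<Omega>
               + ennreal (4 * (6 * real DIM('a) * unit_ball_vol (real DIM('a))) / (d1 * inf_on p1 \<Omega>)) * emeasure lebesgue (\<Omega> \<inter> {x. v x \<noteq> 0}))"
    using main_bound[of \<Omega> p1 p2 d1 d2 s2 s1 v] A p1pos sp by (simp add: mult.assoc)
qed

end
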